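(* Fix a general instance satisfying the unique-default-action assumption, with relevant-action tie-breaking, and a true bias $\alpha^\star\in(0,1]$. At least one of the following holds. 1. There exist constants $c>0$ and $\varepsilon>0$ such that, for every interval $J\subseteq(0,1]$ with $\alpha^\star\in J$ and $|J|\le\varepsilon$, every interval-safe vertex-supported optimizer $\tau$ on $J$ satisfies $P_{\rm info}^J(\tau)\ge c$. 2. There exists a true-bias optimal scheme $\tau^\star$ with $P_{\rm info}^{\alpha^\star}(\tau^\star)=0$.
   Context: General model: finite $\Omega$ and $A$, full-support prior $\mu_0$, utilities $u_S,u_R:A\times\Omega\to\mathbb R$, and $\Delta u_{a,a'}(\omega)=u_R(a,\omega)-u_R(a',\omega)$. A receiver with bias $\alpha\in(0,1]$ best-responds to $(1-\alpha)\mu_0+\alpha\nu$. Action regions. For $\alpha\in(0,1]$ set $b_{a,a'}(\alpha)=\frac{\alpha-1}{\alpha}\Delta u_{a,a'}^\top\mu_0$ and $R_a^\alpha=\{\nu\in\Delta(\Omega):\Delta u_{a,a'}^\top\nu\ge b_{a,a'}(\alpha)\ \forall a'\ne a\}$. For an interval $J=[\underline\alpha,\overline\alpha]\subseteq(0,1]$ set $b_{a,a'}(J)=\max\{b_{a,a'}(\underline\alpha),b_{a,a'}(\overline\alpha)\}$, $R_a^J=\{\nu\in\Delta(\Omega):\Delta u_{a,a'}^\top\nu\ge b_{a,a'}(J)\ \forall a'\ne a\}$, and $\mathrm{int}_{IC}(R_a^J)$ the same set with strict inequalities. Relevant actions: $A_{\rm rel}$ is the set of actions that are the unique maximizer of $\sum_\omega((1-\alpha^\star)\mu_0(\omega)+\alpha^\star\nu(\omega))u_R(\cdot,\omega)$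 for some $\nu\in\Delta(\Omega)$. Tie-breaking: the receiver never picks an action outside $A_{\rm rel}$ and breaks ties among relevant actions in the sender's favor. Unique default action: $\arg\max_a\sum_\omega\mu_0(\omega)u_R(a,\omega)=\{a_0\}$. Schemes. A scheme is a finite list of triples $(p_i,\nu_i,a_i)$ with $p_i\ge0$, $\sum p_i=1$, $\sum p_i\nu_i=\mu_0$, and value $\sum_ip_i\sum_\omega\nu_i(\omega)u_S(a_i,\omega)$. - A true-bias optimal scheme has $a_i\in A_{\rm rel}$, $\nu_i\in R_{a_i}^{\alpha^\star}$, and maximal value among such schemes. - An interval-safe vertex-supported optimizer on $J$ is a scheme with $\mathrm{int}_{IC}(R_{a_i}^J)\ne\emptyset$ and $\nu_i$ a vertex of the polytope $R_{a_i}^J$, whose value equals the supremum of values over all schemes with $\nu_i\in R_{a_i}^J$ and $\mathrm{int}_{IC}(R_{a_i}^J)\neq\emptyset$. Informative posteriors. A pair $(a,a')$ is movable if $\Delta u_{a,a'}^\top\mu_0\ne0$. - $P_{\rm info}^J(\tau)$ is the total mass $p_i$ of atoms such that $\Delta u_{a_i,a'}^\top\nu_i=b_{a_i,a'}(J)$ for some movable pair $(a_i,a')$. - $P_{\rm info}^{\alpha^\star}(\tau)$ is defined the same way with $b_{a_i,a'}(\alpha^\star)$ in place of $b_{a_i,a'}(J)$. *)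

theory Defs
  imports "HOL-Analysis.Analysis"
begin

definition belief :: "real^'w::finite \<Rightarrow> bool" where
  "belief \<nu> \<longleftrightarrow> (\<forall>w. 0 \<le> \<nu> $ w) \<and> (\<Sum>w\<in>UNIV. \<nu> $ w) = 1"

definition du :: "('a \<Rightarrow> 'w::finite \<Rightarrow> real) \<Rightarrow> 'a \<Rightarrow> 'a \<Rightarrow> real^'w \<Rightarrow> real" where
  "du uR a a' \<nu> = (\<Sum>w\<in>UNIV. (uR a w - uR a' w) * \<nu> $ w)"

definition bnd :: "('a \<Rightarrow> 'w::finite \<Rightarrow> real) \<Rightarrow> real^'w \<Rightarrow> 'a \<Rightarrow> 'a \<Rightarrow> real \<Rightarrow> real" where
  "bnd uR \<mu>0 a a' \<alpha> = ((\<alpha> - 1) / \<alpha>) * du uR a a' \<mu>0"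

definition bndJ :: "('a \<Rightarrow> 'w::finite \<Rightarrow> real) \<Rightarrow> real^'w \<Rightarrow> 'a \<Rightarrow> 'a \<Rightarrow> real \<Rightarrow> real \<Rightarrow> real" where
  "bndJ uR \<mu>0 a a' lo hi = max (bnd uR \<mu>0 a a' lo) (bnd uR \<mu>0 a a' hi)"

definition region :: "('a \<Rightarrow> 'w::finite \<Rightarrow> real) \<Rightarrow> real^'w \<Rightarrow> 'a \<Rightarrow> real \<Rightarrow> (real^'w) set" where
  "region uR \<mu>0 a \<alpha> = {\<nu>. belief \<nu> \<and> (\<forall>a'. a' \<noteq> a \<longrightarrow> du uR a a' \<nu> \<ge> bnd uR \<mu>0 a a' \<alpha>)}"

definition regionJ :: "('a \<Rightarrow> 'w::finite \<Rightarrow> real) \<Rightarrow> real^'w \<Rightarrow> 'a \<Rightarrow> real \<Rightarrow> real \<Rightarrow> (real^'w) set" where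
  "regionJ uR \<mu>0 a lo hi = {\<nu>. belief \<nu> \<and> (\<forall>a'. a' \<noteq> a \<longrightarrow> du uR a a' \<nu> \<ge> bndJ uR \<mu>0 a a' lo hi)}"

definition intIC :: "('a \<Rightarrow> 'w::finite \<Rightarrow> real) \<Rightarrow> real^'w \<Rightarrow> 'a \<Rightarrow> real \<Rightarrow> real \<Rightarrow> (real^'w) set" where
  "intIC uR \<mu>0 a lo hi = {\<nu>. belief \<nu> \<and> (\<forall>a'. a' \<noteq> a \<longrightarrow> du uR a a' \<nu> > bndJ uR \<mu>0 a a' lo hi)}"

definition eu :: "('a \<Rightarrow> 'w::finite \<Rightarrow> real) \<Rightarrow> real^'w \<Rightarrow> 'a \<Rightarrow> real" where
  "eu u m a = (\<Sum>w\<in>UNIV. m $ w * u a w)"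

definition relevant :: "('a \<Rightarrow> 'w::finite \<Rightarrow> real) \<Rightarrow> real^'w \<Rightarrow> real \<Rightarrow> 'a set" where
  "relevant uR \<mu>0 \<alpha>s = {a. \<exists>\<nu>. belief \<nu> \<and>
     (\<forall>a'. a' \<noteq> a \<longrightarrow> eu uR ((1 - \<alpha>s) *\<^sub>R \<mu>0 + \<alpha>s *\<^sub>R \<nu>) a' < eu uR ((1 - \<alpha>s) *\<^sub>R \<mu>0 + \<alpha>s *\<^sub>R \<nu>) a)}"

type_synonym ('w, 'a) scheme = "(real \<times> (real^'w) \<times> 'a) list"

definition is_scheme :: "real^'w::finite \<Rightarrow> ('w, 'a) scheme \<Rightarrow> bool" where
  "is_scheme \<mu>0 \<tau> \<longleftrightarrow> (\<forall>(p, \<nu>, a) \<in> set \<tau>. 0 \<le> p) \<and>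
     (\<Sum>i<length \<tau>. fst (\<tau> ! i)) = 1 \<and>
     (\<Sum>i<length \<tau>. fst (\<tau> ! i) *\<^sub>R fst (snd (\<tau> ! i))) = \<mu>0"

definition sched_value :: "('a \<Rightarrow> 'w::finite \<Rightarrow> real) \<Rightarrow> ('w, 'a) scheme \<Rightarrow> real" where
  "sched_value uS \<tau> = (\<Sum>i<length \<tau>. fst (\<tau> ! i) *
      (\<Sum>w\<in>UNIV. fst (snd (\<tau> ! i)) $ w * uS (snd (snd (\<tau> ! i))) w))"

definition true_bias_feasible ::
  "('a \<Rightarrow> 'w::finite \<Rightarrow> real) \<Rightarrow> real^'w \<Rightarrow> real \<Rightarrow> ('w, 'a) scheme \<Rightarrow> bool" where
  "true_bias_feasible uR \<mu>0 \<alpha>s \<tau> \<longleftrightarrow> is_scheme \<mu>0 \<tau> \<and>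
     (\<forall>(p, \<nu>, a) \<in> set \<tau>. a \<in> relevant uR \<mu>0 \<alpha>s \<and> \<nu> \<in> region uR \<mu>0 a \<alpha>s)"

definition true_bias_optimal ::
  "('a \<Rightarrow> 'w::finite \<Rightarrow> real) \<Rightarrow> ('a \<Rightarrow> 'w \<Rightarrow> real) \<Rightarrow> real^'w \<Rightarrow> real \<Rightarrow> ('w, 'a) scheme \<Rightarrow> bool" where
  "true_bias_optimal uS uR \<mu>0 \<alpha>s \<tau> \<longleftrightarrow> true_bias_feasible uR \<mu>0 \<alpha>s \<tau> \<and>
     (\<forall>\<sigma>. true_bias_feasible uR \<mu>0 \<alpha>s \<sigma> \<longrightarrow> sched_value uS \<sigma> \<le> sched_value uS \<tau>)"

definition interval_feasible ::
  "('a \<Rightarrow> 'w::finite \<Rightarrow> real) \<Rightarrow> real^'w \<Rightarrow> real \<Rightarrow> real \<Rightarrow> ('w, 'a) scheme \<Rightarrow> bool" where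
  "interval_feasible uR \<mu>0 lo hi \<tau> \<longleftrightarrow> is_scheme \<mu>0 \<tau> \<and>
     (\<forall>(p, \<nu>, a) \<in> set \<tau>. \<nu> \<in> regionJ uR \<mu>0 a lo hi \<and> intIC uR \<mu>0 a lo hi \<noteq> {})"

definition interval_safe_vertex_opt ::
  "('a \<Rightarrow> 'w::finite \<Rightarrow> real) \<Rightarrow> ('a \<Rightarrow> 'w \<Rightarrow> real) \<Rightarrow> real^'w \<Rightarrow> real \<Rightarrow> real \<Rightarrow> ('w, 'a) scheme \<Rightarrow> bool" where
  "interval_safe_vertex_opt uS uR \<mu>0 lo hi \<tau> \<longleftrightarrow> is_scheme \<mu>0 \<tau> \<and>
     (\<forall>(p, \<nu>, a) \<in> set \<tau>. intIC uR \<mu>0 a lo hi \<noteq> {} \<and> \<nu> extreme_point_of (regionJ uR \<mu>0 a lo hi)) \<and>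
     sched_value uS \<tau> = Sup (sched_value uS ` {\<sigma>. interval_feasible uR \<mu>0 lo hi \<sigma>})"

definition movable :: "('a \<Rightarrow> 'w::finite \<Rightarrow> real) \<Rightarrow> real^'w \<Rightarrow> 'a \<Rightarrow> 'a \<Rightarrow> bool" where
  "movable uR \<mu>0 a a' \<longleftrightarrow> du uR a a' \<mu>0 \<noteq> 0"

definition P_info_J ::
  "('a \<Rightarrow> 'w::finite \<Rightarrow> real) \<Rightarrow> real^'w \<Rightarrow> real \<Rightarrow> real \<Rightarrow> ('w, 'a) scheme \<Rightarrow> real" where
  "P_info_J uR \<mu>0 lo hi \<tau> = (\<Sum>i<length \<tau>.
      if (\<exists>a'. movable uR \<mu>0 (snd (snd (\<tau> ! i))) a' \<and>
               du uR (snd (snd (\<tau> ! i))) a' (fst (snd (\<tau> ! i))) = bndJ uR \<mu>0 (snd (snd (\<tau> ! i))) a' lo hi)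
      then fst (\<tau> ! i) else 0)"

definition P_info_alpha ::
  "('a \<Rightarrow> 'w::finite \<Rightarrow> real) \<Rightarrow> real^'w \<Rightarrow> real \<Rightarrow> ('w, 'a) scheme \<Rightarrow> real" where
  "P_info_alpha uR \<mu>0 \<alpha>s \<tau> = (\<Sum>i<length \<tau>.
      if (\<exists>a'. movable uR \<mu>0 (snd (snd (\<tau> ! i))) a' \<and>
               du uR (snd (snd (\<tau> ! i))) a' (fst (snd (\<tau> ! i))) = bnd uR \<mu>0 (snd (snd (\<tau> ! i))) a' \<alpha>s)
      then fst (\<tau> ! i) else 0)"

end

theory Submission
  imports Defs
begin


lemma sum_idx: "(\<Sum>i<length xs. f (xs ! i)) = sum_list (map f xs)"
  using sum_list_sum_nth[of "map f xs"] by (simp add: atLeast0LessThan)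

lemma sum_list_vec_nth: "(sum_list xs) $ w = sum_list (map (\<lambda>x. x $ w) xs)"
  by (induction xs) auto

lemma du_add: "du uR a a' (x + y) = du uR a a' x + du uR a a' y"
  by (simp add: du_def distrib_left sum.distrib)
lemma du_scale: "du uR a a' (c *\<^sub>R x) = c * du uR a a' x"
  by (simp add: du_def sum_distrib_left algebra_simps)
lemma du_diff: "du uR a a' \<nu> = eu uR \<nu> a - eu uR \<nu> a'"
  by (simp add: du_def eu_def sum_subtractf algebra_simps)
lemma eu_add: "eu u (x + y) a = eu u x a + eu u y a"
  by (simp add: eu_def distrib_right sum.distrib)
lemma eu_scale: "eu u (c *\<^sub>R x) a = c * eu u x a"
  by (simp add: eu_def sum_distrib_left algebra_simps)
lemma du_sum_list: "du uR a a' (sum_list (map f xs)) = sum_list (map (\<lambda>x. du uR a a' (f x)) xs)"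
  by (induction xs) (simp add: du_def, simp add: du_add)
lemma eu_sum_list: "eu u (sum_list (map f xs)) a = sum_list (map (\<lambda>x. eu u (f x) a) xs)"
  by (induction xs) (simp add: eu_def, simp add: eu_add)

definition Kf :: "('a::finite \<Rightarrow> 'w::finite \<Rightarrow> real) \<Rightarrow> real" where
  "Kf u = (\<Sum>a\<in>UNIV. \<Sum>w\<in>UNIV. \<bar>u a w\<bar>)"

lemma Kf_nonneg: "0 \<le> Kf u"
  unfolding Kf_def by (auto intro: sum_nonneg)

lemma Kf_ge: "(\<Sum>w\<in>UNIV. \<bar>u a w\<bar>) \<le> Kf u"
  unfolding Kf_def by (rule member_le_sum) (auto intro: sum_nonneg)

lemma lin_belief_bound:
  assumes "belief \<nu>"
  shows "\<bar>\<Sum>w\<in>UNIV. c w * \<nu> $ w\<bar> \<le> (\<Sum>w\<in>UNIV. \<bar>c w\<bar>)"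
proof -
  have le1: "\<nu> $ w \<le> 1" for w
  proof -
    have "\<nu> $ w \<le> (\<Sum>w\<in>UNIV. \<nu> $ w)"
      by (rule member_le_sum) (use assms in \<open>auto simp: belief_def\<close>)
    then show ?thesis using assms by (simp add: belief_def)
  qed
  have "\<bar>\<Sum>w\<in>UNIV. c w * \<nu> $ w\<bar> \<le> (\<Sum>w\<in>UNIV. \<bar>c w * \<nu> $ w\<bar>)" by (rule sum_abs)
  also have "\<dots> \<le> (\<Sum>w\<in>UNIV. \<bar>c w\<bar>)"
  proof (rule sum_mono)
    fix w
    have "0 \<le> \<nu> $ w" using assms by (simp add: belief_def)
    then show "\<bar>c w * \<nu> $ w\<bar> \<le> \<bar>c w\<bar>" using le1[of w]
      by (simp add: abs_mult mult_left_le)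
  qed
  finally show ?thesis .
qed

lemma eu_bound: "belief \<nu> \<Longrightarrow> \<bar>eu u \<nu> a\<bar> \<le> Kf u"
  using lin_belief_bound[of \<nu> "\<lambda>w. u a w"] Kf_ge[of u a] unfolding eu_def
  by (simp add: mult.commute)

lemma du_bound: "belief \<nu> \<Longrightarrow> \<bar>du u a a' \<nu>\<bar> \<le> 2 * Kf u"
  using eu_bound[of \<nu> u a] eu_bound[of \<nu> u a'] by (simp add: du_diff)

lemma frac_mono: "0 < x \<Longrightarrow> x \<le> y \<Longrightarrow> (x - 1) / x \<le> (y - 1) / (y::real)"
  by (simp add: field_simps)

lemma bnd_le_bndJ:
  assumes "0 < lo" "lo \<le> al" "al \<le> hi"
  shows "bnd uR \<mu>0 a a' al \<le> bndJ uR \<mu>0 a a' lo hi"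
proof (cases "du uR a a' \<mu>0 \<ge> 0")
  case True
  have "(al - 1) / al \<le> (hi - 1) / hi" using assms by (intro frac_mono) auto
  then have "bnd uR \<mu>0 a a' al \<le> bnd uR \<mu>0 a a' hi"
    unfolding bnd_def using True by (intro mult_right_mono) auto
  then show ?thesis by (simp add: bndJ_def)
next
  case False
  have "(lo - 1) / lo \<le> (al - 1) / al" using assms by (intro frac_mono) auto
  then have "bnd uR \<mu>0 a a' al \<le> bnd uR \<mu>0 a a' lo"
    unfolding bnd_def using False by (intro mult_right_mono_neg) auto
  then show ?thesis by (simp add: bndJ_def)
qed

lemma bnd_cont:
  assumes "0 < al" "\<bar>x - al\<bar> \<le> e" "e \<le> al / 2"
  shows "bnd uR \<mu>0 a a' x \<le> bnd uR \<mu>0 a a' al + \<bar>du uR a a' \<mu>0\<bar> * (2 * e / al\<^sup>2)"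
proof -
  let ?d = "du uR a a' \<mu>0"
  have x: "x \<ge> al / 2" using assms by auto
  have xp: "x > 0" using x assms by auto
  have eq: "(x - 1) / x - (al - 1) / al = (x - al) / (x * al)"
    using xp assms by (simp add: field_simps)
  have "\<bar>(x - al) / (x * al)\<bar> = \<bar>x - al\<bar> / (x * al)" using xp assms by (simp add: abs_divide)
  also have "\<dots> \<le> e / (x * al)" using xp assms by (intro divide_right_mono) auto
  also have "\<dots> \<le> e / (al / 2 * al)" using xp assms x
    by (intro divide_left_mono mult_right_mono) auto
  also have "\<dots> = 2 * e / al\<^sup>2" by (simp add: power2_eq_square field_simps)
  finally have h: "\<bar>(x - 1) / x - (al - 1) / al\<bar> \<le> 2 * e / al\<^sup>2" using eq by simp
  have "bnd uR \<mu>0 a a' x - bnd uR \<mu>0 a a' al = ((x - 1) / x - (al - 1) / al) * ?d"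
    by (simp add: bnd_def algebra_simps)
  also have "\<dots> \<le> \<bar>((x - 1) / x - (al - 1) / al) * ?d\<bar>" by (rule abs_ge_self)
  also have "\<dots> \<le> 2 * e / al\<^sup>2 * \<bar>?d\<bar>" unfolding abs_mult
    using h by (intro mult_right_mono) auto
  finally show ?thesis by (simp add: mult.commute)
qed


lemma sum_list_scaleR: "sum_list (map (\<lambda>x. c *\<^sub>R (f x::'b::real_vector)) xs) = c *\<^sub>R sum_list (map f xs)"
  by (induction xs) (auto simp: scaleR_right_distrib)

lemma sum_sum_list: "(\<Sum>w\<in>A. sum_list (map (\<lambda>x. f x w) xs)) = sum_list (map (\<lambda>x. \<Sum>w\<in>A. f x w) xs)"
  by (induction xs) (auto simp: sum.distrib)

lemma is_scheme_list: "is_scheme \<mu>0 \<tau> \<longleftrightarrow> (\<forall>x\<in>set \<tau>. 0 \<le> fst x) \<and> sum_list (map fst \<tau>) = 1 \<and>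
   sum_list (map (\<lambda>x. fst x *\<^sub>R fst (snd x)) \<tau>) = \<mu>0"
  unfolding is_scheme_def by (auto simp: split_def sum_idx[symmetric])

lemma sched_value_list: "sched_value uS \<tau> = sum_list (map (\<lambda>x. fst x * eu uS (fst (snd x)) (snd (snd x))) \<tau>)"
  unfolding sched_value_def eu_def by (simp add: sum_idx[symmetric])

lemma P_info_J_list: "P_info_J uR \<mu>0 lo hi \<tau> = sum_list (map (\<lambda>x.
      if (\<exists>a'. movable uR \<mu>0 (snd (snd x)) a' \<and>
               du uR (snd (snd x)) a' (fst (snd x)) = bndJ uR \<mu>0 (snd (snd x)) a' lo hi)
      then fst x else 0) \<tau>)"
  unfolding P_info_J_def by (simp add: sum_idx[symmetric])

lemma P_info_alpha_list: "P_info_alpha uR \<mu>0 al \<tau> = sum_list (map (\<lambda>x.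
      if (\<exists>a'. movable uR \<mu>0 (snd (snd x)) a' \<and>
               du uR (snd (snd x)) a' (fst (snd x)) = bnd uR \<mu>0 (snd (snd x)) a' al)
      then fst x else 0) \<tau>)"
  unfolding P_info_alpha_def by (simp add: sum_idx[symmetric])

lemma sv_bound:
  assumes "is_scheme \<mu>0 \<sigma>" "\<forall>x\<in>set \<sigma>. belief (fst (snd x))"
  shows "\<bar>sched_value uS \<sigma>\<bar> \<le> Kf uS"
proof -
  have "\<bar>sched_value uS \<sigma>\<bar> \<le> sum_list (map (\<lambda>x. \<bar>fst x * eu uS (fst (snd x)) (snd (snd x))\<bar>) \<sigma>)"
    unfolding sched_value_list using sum_list_abs[of "map _ \<sigma>"] by (simp add: o_def)
  also have "\<dots> \<le> sum_list (map (\<lambda>x. fst x * Kf uS) \<sigma>)"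
  proof (rule sum_list_mono)
    fix x assume x: "x \<in> set \<sigma>"
    then have "0 \<le> fst x" using assms(1) by (simp add: is_scheme_list)
    moreover have "\<bar>eu uS (fst (snd x)) (snd (snd x))\<bar> \<le> Kf uS" using assms(2) x eu_bound by blast
    ultimately show "\<bar>fst x * eu uS (fst (snd x)) (snd (snd x))\<bar> \<le> fst x * Kf uS"
      by (simp add: abs_mult mult_left_mono)
  qed
  also have "\<dots> = Kf uS" using assms(1) by (simp add: is_scheme_list sum_list_mult_const)
  finally show ?thesis .
qed

lemma belief_comb:
  assumes "belief x" "belief y" "0 \<le> t" "t \<le> 1"
  shows "belief ((1 - t) *\<^sub>R x + t *\<^sub>R y)"
  using assms unfolding belief_def
  by (auto simp: sum.distrib sum_distrib_left[symmetric] intro!: add_nonneg_nonneg mult_nonneg_nonneg)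

locale S =
  fixes \<mu>0 :: "real^'w::finite" and uS uR :: "'a::finite \<Rightarrow> 'w \<Rightarrow> real" and \<alpha>s :: real and a0 :: 'a
  assumes fs: "\<forall>w. 0 < \<mu>0 $ w" and ps: "(\<Sum>w\<in>UNIV. \<mu>0 $ w) = 1"
    and a0max: "\<forall>a'. a' \<noteq> a0 \<longrightarrow> eu uR \<mu>0 a' < eu uR \<mu>0 a0"
    and ap: "0 < \<alpha>s" and al1: "\<alpha>s \<le> 1"
begin

definition "K = 2 * Kf uR + Kf uS + 1"
definition "TBF = {\<sigma>. true_bias_feasible uR \<mu>0 \<alpha>s \<sigma>}"
definition "Vs = Sup (sched_value uS ` TBF)"

lemma K_pos: "0 < K"
  using Kf_nonneg[of uR] Kf_nonneg[of uS] unfolding K_def by linarith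

lemma du_K: "belief \<nu> \<Longrightarrow> \<bar>du uR a a' \<nu>\<bar> \<le> K"
  using du_bound[of \<nu> uR a a'] Kf_nonneg[of uS] unfolding K_def by linarith

lemma eu_K: "belief \<nu> \<Longrightarrow> \<bar>eu uS \<nu> a\<bar> \<le> K"
  using eu_bound[of \<nu> uS a] Kf_nonneg[of uR] unfolding K_def by linarith

lemma belief_mu0: "belief \<mu>0"
  using fs ps by (auto simp: belief_def less_imp_le)

lemma du_a0: "a' \<noteq> a0 \<Longrightarrow> du uR a0 a' \<mu>0 > 0"
  using a0max by (simp add: du_diff)

lemma rel_iff: "a \<in> relevant uR \<mu>0 \<alpha>s \<longleftrightarrow> (\<exists>\<nu>. belief \<nu> \<and> (\<forall>a'. a' \<noteq> a \<longrightarrow> du uR a a' \<nu> > bnd uR \<mu>0 a a' \<alpha>s))"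
proof -
  have key: "eu uR ((1 - \<alpha>s) *\<^sub>R \<mu>0 + \<alpha>s *\<^sub>R \<nu>) a' < eu uR ((1 - \<alpha>s) *\<^sub>R \<mu>0 + \<alpha>s *\<^sub>R \<nu>) a
     \<longleftrightarrow> du uR a a' \<nu> > bnd uR \<mu>0 a a' \<alpha>s" for \<nu> a'
  proof -
    have e1: "eu uR ((1 - \<alpha>s) *\<^sub>R \<mu>0 + \<alpha>s *\<^sub>R \<nu>) a - eu uR ((1 - \<alpha>s) *\<^sub>R \<mu>0 + \<alpha>s *\<^sub>R \<nu>) a'
       = \<alpha>s * du uR a a' \<nu> - (\<alpha>s - 1) * du uR a a' \<mu>0"
      by (simp only: eu_add eu_scale du_diff) (simp add: algebra_simps)
    have e2: "(bnd uR \<mu>0 a a' \<alpha>s < du uR a a' \<nu>) \<longleftrightarrow>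
        ((\<alpha>s - 1) * du uR a a' \<mu>0 < \<alpha>s * du uR a a' \<nu>)"
      using ap by (simp add: bnd_def field_simps)
    show ?thesis unfolding e2 using e1 by (intro iffI) linarith+
  qed
  show ?thesis unfolding relevant_def using key by auto
qed

lemma tbf_nonempty: "[(1, \<mu>0, a0)] \<in> TBF"
proof -
  have "a0 \<in> relevant uR \<mu>0 \<alpha>s"
    unfolding relevant_def
    by (rule CollectI, rule exI[of _ \<mu>0]) (use belief_mu0 a0max in \<open>auto simp: scaleR_left_distrib[symmetric]\<close>)
  moreover have "\<mu>0 \<in> region uR \<mu>0 a0 \<alpha>s"
  proof -
    have "du uR a0 a' \<mu>0 \<ge> bnd uR \<mu>0 a0 a' \<alpha>s" if "a' \<noteq> a0" for a'
    proof -
      have "(\<alpha>s - 1) * du uR a0 a' \<mu>0 \<le> 0" using al1 du_a0[OF that]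
        by (intro mult_nonpos_nonneg) auto
      then have "bnd uR \<mu>0 a0 a' \<alpha>s \<le> 0" unfolding bnd_def using ap
        by (simp add: divide_nonpos_pos)
      then show ?thesis using du_a0[OF that] by simp
    qed
    then show ?thesis using belief_mu0 by (auto simp: region_def)
  qed
  ultimately show ?thesis unfolding TBF_def true_bias_feasible_def is_scheme_def by auto
qed

lemma tbf_bound: "\<sigma> \<in> TBF \<Longrightarrow> sched_value uS \<sigma> \<le> K"
proof -
  assume "\<sigma> \<in> TBF"
  then have "is_scheme \<mu>0 \<sigma>" "\<forall>x\<in>set \<sigma>. belief (fst (snd x))"
    unfolding TBF_def true_bias_feasible_def region_def by (auto simp: split_def)
  from sv_bound[OF this, of uS] show ?thesis using Kf_nonneg[of uR] unfolding K_def by linarith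
qed

lemma bdd_TBF: "bdd_above (sched_value uS ` TBF)"
  using tbf_bound by (intro bdd_aboveI[of _ K]) auto

lemma Vs_upper: "\<sigma> \<in> TBF \<Longrightarrow> sched_value uS \<sigma> \<le> Vs"
  unfolding Vs_def using bdd_TBF by (intro cSup_upper) auto

end



lemma belief_le1: "belief \<nu> \<Longrightarrow> \<nu> $ w \<le> 1"
proof -
  assume b: "belief \<nu>"
  have "\<nu> $ w \<le> (\<Sum>w\<in>UNIV. \<nu> $ w)"
    by (rule member_le_sum) (use b in \<open>auto simp: belief_def\<close>)
  then show ?thesis using b by (simp add: belief_def)
qed

lemma du_minus: "du uR a a' (x - y) = du uR a a' x - du uR a a' y"
  by (simp add: du_def right_diff_distrib sum_subtractf)

lemma eu_comb: "eu u ((1 - t) *\<^sub>R x + t *\<^sub>R y) a = (1 - t) * eu u x a + t * eu u y a"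
  by (simp only: eu_add eu_scale)

lemma du_comb: "du u a a' ((1 - t) *\<^sub>R x + t *\<^sub>R y) = (1 - t) * du u a a' x + t * du u a a' y"
  by (simp only: du_add du_scale)

context S begin

lemma bnd_a0_nonpos: "0 < x \<Longrightarrow> x \<le> 1 \<Longrightarrow> a' \<noteq> a0 \<Longrightarrow> bnd uR \<mu>0 a0 a' x \<le> 0"
proof -
  assume h: "0 < x" "x \<le> 1" "a' \<noteq> a0"
  have "(x - 1) * du uR a0 a' \<mu>0 \<le> 0" using h du_a0[OF h(3)]
    by (intro mult_nonpos_nonneg) auto
  then show ?thesis unfolding bnd_def using h by (simp add: divide_nonpos_pos)
qed

lemma bndJ_a0_nonpos: "0 < lo \<Longrightarrow> lo \<le> hi \<Longrightarrow> hi \<le> 1 \<Longrightarrow> a' \<noteq> a0 \<Longrightarrow> bndJ uR \<mu>0 a0 a' lo hi \<le> 0"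
  unfolding bndJ_def using bnd_a0_nonpos[of lo a'] bnd_a0_nonpos[of hi a'] by auto

lemma bndJ_le:
  assumes "0 < lo" "lo \<le> \<alpha>s" "\<alpha>s \<le> hi" "hi - lo \<le> e" "e \<le> \<alpha>s / 2"
  shows "bndJ uR \<mu>0 a a' lo hi \<le> bnd uR \<mu>0 a a' \<alpha>s + K * (2 * e / \<alpha>s\<^sup>2)"
proof -
  have d: "\<bar>du uR a a' \<mu>0\<bar> \<le> K" using du_K belief_mu0 by blast
  have c: "0 \<le> 2 * e / \<alpha>s\<^sup>2" using assms by auto
  have "\<bar>du uR a a' \<mu>0\<bar> * (2 * e / \<alpha>s\<^sup>2) \<le> K * (2 * e / \<alpha>s\<^sup>2)"
    using d c by (rule mult_right_mono)
  moreover have "bnd uR \<mu>0 a a' lo \<le> bnd uR \<mu>0 a a' \<alpha>s + \<bar>du uR a a' \<mu>0\<bar> * (2 * e / \<alpha>s\<^sup>2)"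
    using assms ap by (intro bnd_cont) auto
  moreover have "bnd uR \<mu>0 a a' hi \<le> bnd uR \<mu>0 a a' \<alpha>s + \<bar>du uR a a' \<mu>0\<bar> * (2 * e / \<alpha>s\<^sup>2)"
    using assms ap by (intro bnd_cont) auto
  ultimately show ?thesis unfolding bndJ_def by auto
qed

lemma tbf_atoms:
  assumes "\<tau> \<in> TBF" "x \<in> set \<tau>"
  shows "snd (snd x) \<in> relevant uR \<mu>0 \<alpha>s" "fst (snd x) \<in> region uR \<mu>0 (snd (snd x)) \<alpha>s"
    "belief (fst (snd x))" "0 \<le> fst x"
  using assms unfolding TBF_def true_bias_feasible_def region_def is_scheme_def
  by (auto simp: split_def)

lemma stepA:
  assumes eta: "0 < \<eta>"
  shows "\<exists>\<epsilon>>0. \<forall>lo hi. 0 < lo \<and> lo \<le> \<alpha>s \<and> \<alpha>s \<le> hi \<and> hi \<le> 1 \<and> hi - lo \<le> \<epsilon> \<longrightarrow>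
     (\<exists>\<sigma>. interval_feasible uR \<mu>0 lo hi \<sigma> \<and> Vs - \<eta> \<le> sched_value uS \<sigma>)"
proof -
  obtain \<tau> where \<tau>: "\<tau> \<in> TBF" "Vs - \<eta>/2 < sched_value uS \<tau>"
  proof -
    have "\<not> (\<forall>x\<in>sched_value uS ` TBF. x \<le> Vs - \<eta>/2)"
    proof
      assume h: "\<forall>x\<in>sched_value uS ` TBF. x \<le> Vs - \<eta>/2"
      have "Sup (sched_value uS ` TBF) \<le> Vs - \<eta>/2"
        using h tbf_nonempty by (intro cSup_least) auto
      then show False using eta unfolding Vs_def by simp
    qed
    then show thesis using that by force
  qed
  define rel where "rel = relevant uR \<mu>0 \<alpha>s"
  define nst where "nst a = (SOME \<nu>. belief \<nu> \<and> (\<forall>a'. a' \<noteq> a \<longrightarrow> du uR a a' \<nu> > bnd uR \<mu>0 a a' \<alpha>s))" for a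
  have nst: "belief (nst a) \<and> (\<forall>a'. a' \<noteq> a \<longrightarrow> du uR a a' (nst a) > bnd uR \<mu>0 a a' \<alpha>s)" if "a \<in> rel" for a
  proof -
    from that have "\<exists>\<nu>. belief \<nu> \<and> (\<forall>a'. a' \<noteq> a \<longrightarrow> du uR a a' \<nu> > bnd uR \<mu>0 a a' \<alpha>s)"
      by (simp add: rel_def rel_iff)
    then show ?thesis unfolding nst_def by (rule someI_ex)
  qed
  define GS where "GS = (\<lambda>(a,a'). du uR a a' (nst a) - bnd uR \<mu>0 a a' \<alpha>s) ` {(a,a'). a \<in> rel \<and> a' \<noteq> a}"
  define gap where "gap = Min (insert 1 GS)"
  have finGS: "finite GS" unfolding GS_def by simp
  have gap_pos: "0 < gap" unfolding gap_def using finGS nst by (auto simp: Min_gr_iff GS_def)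
  have gap_le: "gap \<le> du uR a a' (nst a) - bnd uR \<mu>0 a a' \<alpha>s" if "a \<in> rel" "a' \<noteq> a" for a a'
    unfolding gap_def using finGS that by (intro Min_le) (auto simp: GS_def)
  define \<mu>min where "\<mu>min = Min (range (\<lambda>w. \<mu>0 $ w))"
  have \<mu>min_pos: "0 < \<mu>min" unfolding \<mu>min_def using fs by (auto simp: Min_gr_iff)
  have \<mu>min_le: "\<mu>min \<le> \<mu>0 $ w" for w unfolding \<mu>min_def by (intro Min_le) auto
  define g0 where "g0 = Min (insert 1 ((\<lambda>a'. du uR a0 a' \<mu>0) ` {a'. a' \<noteq> a0}))"
  have g0_pos: "0 < g0" unfolding g0_def using du_a0 by (auto simp: Min_gr_iff)
  have g0_le: "g0 \<le> du uR a0 a' \<mu>0" if "a' \<noteq> a0" for a'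
    unfolding g0_def using that by (intro Min_le) auto
  have Kp: "0 < K" by (rule K_pos)
  define s where "s = min (1/2) (min \<mu>min (min (g0/(2*K)) (\<eta>/(8*K))))"
  have s_pos: "0 < s" unfolding s_def using \<mu>min_pos g0_pos Kp eta by auto
  have s_half: "s \<le> 1/2" and s_mu: "s \<le> \<mu>min" unfolding s_def by auto
  have s_g0: "s * (2*K) \<le> g0"
  proof -
    have "s \<le> g0/(2*K)" unfolding s_def by auto
    then show ?thesis using Kp by (simp add: field_simps)
  qed
  have s_eta: "s * (8*K) \<le> \<eta>"
  proof -
    have "s \<le> \<eta>/(8*K)" unfolding s_def by auto
    then show ?thesis using Kp by (simp add: field_simps)
  qed
  define t where "t = s^2"
  have t_pos: "0 < t" unfolding t_def using s_pos by simp
  have t_le: "t \<le> s" unfolding t_def using s_pos s_half by (simp add: power2_eq_square mult_le_cancel_right1)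
  have t_lt1: "t < 1" using t_le s_half by simp
  define \<epsilon> where "\<epsilon> = min (\<alpha>s/2) (t*gap*\<alpha>s^2/(2*K))"
  have \<epsilon>_pos: "0 < \<epsilon>" unfolding \<epsilon>_def using ap t_pos gap_pos Kp by auto
  have \<epsilon>_half: "\<epsilon> \<le> \<alpha>s/2" unfolding \<epsilon>_def by auto
  have \<epsilon>K: "K * (2 * \<epsilon> / \<alpha>s\<^sup>2) \<le> t * gap"
  proof -
    have "\<epsilon> \<le> t*gap*\<alpha>s^2/(2*K)" unfolding \<epsilon>_def by auto
    then have "2*K*\<epsilon> \<le> t*gap*\<alpha>s^2" using Kp by (simp add: field_simps)
    then show ?thesis using ap by (simp add: field_simps)
  qed
  show ?thesis
  proof (intro exI[of _ \<epsilon>] conjI allI impI)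
    show "0 < \<epsilon>" by (rule \<epsilon>_pos)
    fix lo hi assume J: "0 < lo \<and> lo \<le> \<alpha>s \<and> \<alpha>s \<le> hi \<and> hi \<le> 1 \<and> hi - lo \<le> \<epsilon>"
    have bJ: "bndJ uR \<mu>0 a a' lo hi \<le> bnd uR \<mu>0 a a' \<alpha>s + t*gap" for a a'
      using bndJ_le[of lo hi \<epsilon> a a'] J \<epsilon>_half \<epsilon>K by linarith
    have \<tau>s: "\<forall>x\<in>set \<tau>. 0 \<le> fst x" "sum_list (map fst \<tau>) = 1"
        "sum_list (map (\<lambda>x. fst x *\<^sub>R fst (snd x)) \<tau>) = \<mu>0"
      using \<tau>(1) unfolding TBF_def true_bias_feasible_def is_scheme_list by auto
    have \<tau>a: "snd (snd x) \<in> rel" "fst (snd x) \<in> region uR \<mu>0 (snd (snd x)) \<alpha>s"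
        "belief (fst (snd x))" if "x \<in> set \<tau>" for x
      using tbf_atoms[OF \<tau>(1) that] unfolding rel_def by auto
    define mm where "mm = sum_list (map (\<lambda>x. fst x *\<^sub>R nst (snd (snd x))) \<tau>)"
    have mm_belief: "belief mm"
      unfolding belief_def
    proof
      show "\<forall>w. 0 \<le> mm $ w"
      proof (intro allI, unfold mm_def sum_list_vec_nth, rule sum_list_nonneg)
        fix w v assume "v \<in> set (map (\<lambda>x. x $ w) (map (\<lambda>x. fst x *\<^sub>R nst (snd (snd x))) \<tau>))"
        then obtain x where x: "x \<in> set \<tau>" "v = (fst x *\<^sub>R nst (snd (snd x))) $ w" by auto
        have "0 \<le> nst (snd (snd x)) $ w" using nst[OF \<tau>a(1)[OF x(1)]] by (simp add: belief_def)
        then show "0 \<le> v" using x \<tau>s(1) by simp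
      qed
      have "(\<Sum>w\<in>UNIV. mm $ w) = sum_list (map (\<lambda>x. \<Sum>w\<in>UNIV. fst x * nst (snd (snd x)) $ w) \<tau>)"
        unfolding mm_def sum_list_vec_nth by (simp add: sum_sum_list)
      also have "\<dots> = sum_list (map fst \<tau>)"
      proof -
        have "map (\<lambda>x. \<Sum>w\<in>UNIV. fst x * nst (snd (snd x)) $ w) \<tau> = map fst \<tau>"
        proof (rule map_cong)
          fix x assume "x \<in> set \<tau>"
          then have "belief (nst (snd (snd x)))" using nst \<tau>a(1) by blast
          then show "(\<Sum>w\<in>UNIV. fst x * nst (snd (snd x)) $ w) = fst x"
            by (simp add: belief_def sum_distrib_left[symmetric])
        qed simp
        then show ?thesis by (rule arg_cong[where f=sum_list])
      qed
      finally show "(\<Sum>w\<in>UNIV. mm $ w) = 1" using \<tau>s(2) by simp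
    qed
    define y where "y = \<mu>0 + (s - s^2) *\<^sub>R (\<mu>0 - mm)"
    have ss: "0 \<le> s - s^2" "s - s^2 \<le> s" using s_pos s_half by (auto simp: power2_eq_square mult_le_cancel_right1)
    have y_belief: "belief y"
      unfolding belief_def
    proof
      show "\<forall>w. 0 \<le> y $ w"
      proof
        fix w
        have m1: "mm $ w \<le> 1" using belief_le1[OF mm_belief] .
        have f1: "(s - s^2) * mm $ w \<le> (s - s^2)" using ss m1 by (simp add: mult_left_le)
        have f2: "0 \<le> (s - s^2) * \<mu>0 $ w" using ss fs by (simp add: less_imp_le)
        have f3: "s \<le> \<mu>0 $ w" using s_mu \<mu>min_le[of w] by linarith
        have f4: "y $ w = \<mu>0 $ w + ((s - s^2) * \<mu>0 $ w - (s - s^2) * mm $ w)"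
          by (simp add: y_def right_diff_distrib)
        show "0 \<le> y $ w" using f1 f2 f3 f4 ss by linarith
      qed
      show "(\<Sum>w\<in>UNIV. y $ w) = 1"
        using mm_belief ps unfolding y_def belief_def
        by (simp add: sum.distrib sum_distrib_left[symmetric] sum_subtractf)
    qed
    have du_y: "0 \<le> du uR a0 a' y" if "a' \<noteq> a0" for a'
    proof -
      have X: "\<bar>du uR a0 a' \<mu>0 - du uR a0 a' mm\<bar> \<le> 2 * K"
        using du_K[OF belief_mu0, of a0 a'] du_K[OF mm_belief, of a0 a'] by linarith
      have "\<bar>(s - s^2) * (du uR a0 a' \<mu>0 - du uR a0 a' mm)\<bar> \<le> s * (2 * K)"
        unfolding abs_mult using ss X s_pos by (intro mult_mono) auto
      moreover have "du uR a0 a' y = du uR a0 a' \<mu>0 + (s - s^2) * (du uR a0 a' \<mu>0 - du uR a0 a' mm)"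
        unfolding y_def by (simp only: du_add du_scale du_minus)
      ultimately show ?thesis using s_g0 g0_le[OF that] by linarith
    qed
    define \<sigma> where "\<sigma> = map (\<lambda>x. ((1-s)*fst x, (1-t) *\<^sub>R fst (snd x) + t *\<^sub>R nst (snd (snd x)), snd (snd x))) \<tau> @ [(s, y, a0)]"
    have atoms: "fst (snd z) \<in> regionJ uR \<mu>0 (snd (snd z)) lo hi \<and> intIC uR \<mu>0 (snd (snd z)) lo hi \<noteq> {}"
      if z: "z \<in> set \<sigma>" for z
    proof -
      consider (old) x where "x \<in> set \<tau>" "z = ((1-s)*fst x, (1-t) *\<^sub>R fst (snd x) + t *\<^sub>R nst (snd (snd x)), snd (snd x))"
        | (new) "z = (s, y, a0)"
        using z unfolding \<sigma>_def by auto
      then show ?thesis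
      proof cases
        case (old x)
        let ?a = "snd (snd x)"
        have ar: "?a \<in> rel" using \<tau>a(1)[OF old(1)] .
        have nb: "belief (nst ?a)" using nst[OF ar] by blast
        have nu_reg: "\<forall>a'. a' \<noteq> ?a \<longrightarrow> du uR ?a a' (fst (snd x)) \<ge> bnd uR \<mu>0 ?a a' \<alpha>s"
          using \<tau>a(2)[OF old(1)] by (simp add: region_def)
        have "(1-t) *\<^sub>R fst (snd x) + t *\<^sub>R nst ?a \<in> regionJ uR \<mu>0 ?a lo hi"
          unfolding regionJ_def
        proof (intro CollectI conjI allI impI)
          show "belief ((1-t) *\<^sub>R fst (snd x) + t *\<^sub>R nst ?a)"
            using belief_comb[OF \<tau>a(3)[OF old(1)] nb] t_pos t_lt1 by simp
          fix a' assume a': "a' \<noteq> ?a"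
          have "(1-t) * bnd uR \<mu>0 ?a a' \<alpha>s \<le> (1-t) * du uR ?a a' (fst (snd x))"
            using nu_reg a' t_lt1 by (intro mult_left_mono) auto
          moreover have "t * (bnd uR \<mu>0 ?a a' \<alpha>s + gap) \<le> t * du uR ?a a' (nst ?a)"
            using gap_le[OF ar a'] t_pos by (intro mult_left_mono) auto
          ultimately have "bnd uR \<mu>0 ?a a' \<alpha>s + t * gap \<le> du uR ?a a' ((1-t) *\<^sub>R fst (snd x) + t *\<^sub>R nst ?a)"
            unfolding du_comb by (simp add: algebra_simps)
          then show "bndJ uR \<mu>0 ?a a' lo hi \<le> du uR ?a a' ((1-t) *\<^sub>R fst (snd x) + t *\<^sub>R nst ?a)"
            using bJ[of ?a a'] by linarith
        qed
        moreover have "nst ?a \<in> intIC uR \<mu>0 ?a lo hi"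
          unfolding intIC_def
        proof (intro CollectI conjI allI impI)
          show "belief (nst ?a)" by (rule nb)
          fix a' assume a': "a' \<noteq> ?a"
          have "t * gap < gap" using t_lt1 gap_pos by simp
          then show "bndJ uR \<mu>0 ?a a' lo hi < du uR ?a a' (nst ?a)"
            using bJ[of ?a a'] gap_le[OF ar a'] by linarith
        qed
        ultimately show ?thesis using old(2) by auto
      next
        case new
        have "y \<in> regionJ uR \<mu>0 a0 lo hi"
        proof -
          have "bndJ uR \<mu>0 a0 a' lo hi \<le> du uR a0 a' y" if "a' \<noteq> a0" for a'
            using du_y[OF that] bndJ_a0_nonpos[of lo hi a'] J that by force
          then show ?thesis unfolding regionJ_def using y_belief by auto
        qed
        moreover have "\<mu>0 \<in> intIC uR \<mu>0 a0 lo hi"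
        proof -
          have "bndJ uR \<mu>0 a0 a' lo hi < du uR a0 a' \<mu>0" if "a' \<noteq> a0" for a'
            using du_a0[OF that] bndJ_a0_nonpos[of lo hi a'] J that by force
          then show ?thesis unfolding intIC_def using belief_mu0 by auto
        qed
        ultimately show ?thesis using new by auto
      qed
    qed
    have sch: "is_scheme \<mu>0 \<sigma>"
      unfolding is_scheme_list
    proof (intro conjI)
      show "\<forall>x\<in>set \<sigma>. 0 \<le> fst x" unfolding \<sigma>_def using \<tau>s(1) s_pos s_half by auto
      show "sum_list (map fst \<sigma>) = 1" unfolding \<sigma>_def using \<tau>s(2)
        by (simp add: o_def sum_list_const_mult)
      have pw: "((1-s)*fst x) *\<^sub>R ((1-t) *\<^sub>R fst (snd x) + t *\<^sub>R nst (snd (snd x)))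
          = ((1-s)*(1-t)) *\<^sub>R (fst x *\<^sub>R fst (snd x)) + ((1-s)*t) *\<^sub>R (fst x *\<^sub>R nst (snd (snd x)))" for x
        by (simp add: scaleR_add_right mult_ac)
      have "sum_list (map (\<lambda>x. fst x *\<^sub>R fst (snd x)) \<sigma>)
          = ((1-s)*(1-t)) *\<^sub>R \<mu>0 + ((1-s)*t) *\<^sub>R mm + s *\<^sub>R y"
        unfolding \<sigma>_def mm_def
        by (simp only: map_append map_map o_def fst_conv snd_conv pw sum_list_addf sum_list_scaleR \<tau>s(3)
             sum_list_append list.map sum_list_simps add_0_right)
      also have "\<dots> = \<mu>0"
        unfolding y_def t_def by (simp add: vec_eq_iff) (simp add: power2_eq_square algebra_simps)
      finally show "sum_list (map (\<lambda>x. fst x *\<^sub>R fst (snd x)) \<sigma>) = \<mu>0" .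
    qed
    have feas: "interval_feasible uR \<mu>0 lo hi \<sigma>"
      unfolding interval_feasible_def using sch atoms by (auto simp: split_def)
    define V where "V = sum_list (map (\<lambda>x. fst x * eu uS (fst (snd x)) (snd (snd x))) \<tau>)"
    define W where "W = sum_list (map (\<lambda>x. fst x * eu uS (nst (snd (snd x))) (snd (snd x))) \<tau>)"
    have V: "V = sched_value uS \<tau>" unfolding V_def sched_value_list ..
    have sv: "sched_value uS \<sigma> = ((1-s)*(1-t)) * V + ((1-s)*t) * W + s * eu uS y a0"
    proof -
      have pw: "((1-s)*fst x) * eu uS ((1-t) *\<^sub>R fst (snd x) + t *\<^sub>R nst (snd (snd x))) (snd (snd x))
          = ((1-s)*(1-t)) * (fst x * eu uS (fst (snd x)) (snd (snd x))) + ((1-s)*t) * (fst x * eu uS (nst (snd (snd x))) (snd (snd x)))" for x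
        unfolding eu_comb by (simp add: algebra_simps)
      show ?thesis unfolding sched_value_list \<sigma>_def V_def W_def
        by (simp add: o_def pw sum_list_addf sum_list_const_mult)
    qed
    have Vb: "\<bar>V\<bar> \<le> K"
      using sv_bound[of \<mu>0 \<tau> uS] \<tau>(1) \<tau>a(3) Kf_nonneg[of uR] unfolding V K_def TBF_def true_bias_feasible_def
      by auto
    have Wb: "\<bar>W\<bar> \<le> K"
    proof -
      have "\<bar>W\<bar> \<le> sum_list (map (\<lambda>x. \<bar>fst x * eu uS (nst (snd (snd x))) (snd (snd x))\<bar>) \<tau>)"
        unfolding W_def using sum_list_abs[of "map _ \<tau>"] by (simp add: o_def)
      also have "\<dots> \<le> sum_list (map (\<lambda>x. fst x * K) \<tau>)"
      proof (rule sum_list_mono)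
        fix x assume x: "x \<in> set \<tau>"
        then have "0 \<le> fst x" using \<tau>s(1) by blast
        moreover have "\<bar>eu uS (nst (snd (snd x))) (snd (snd x))\<bar> \<le> K"
          using eu_K nst \<tau>a(1)[OF x] by blast
        ultimately show "\<bar>fst x * eu uS (nst (snd (snd x))) (snd (snd x))\<bar> \<le> fst x * K"
          by (simp add: abs_mult mult_left_mono)
      qed
      also have "\<dots> = K" using \<tau>s(2) by (simp add: sum_list_mult_const)
      finally show ?thesis .
    qed
    have Eb: "\<bar>eu uS y a0\<bar> \<le> K" using eu_K y_belief by blast
    have "sched_value uS \<sigma> - V = - ((s + t - s * t) * V) + ((1-s)*t) * W + s * eu uS y a0"
      unfolding sv by (simp add: algebra_simps)
    moreover have "\<bar>(s + t - s * t) * V\<bar> \<le> 2 * s * K"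
    proof -
      have a1: "s * t \<le> 1 * t" using t_pos s_half by (intro mult_right_mono) auto
      have a2: "0 \<le> s * t" using t_pos s_pos by simp
      have "0 \<le> s + t - s * t" "s + t - s * t \<le> 2 * s" using a1 a2 t_le s_pos by linarith+
      then show ?thesis unfolding abs_mult using Vb by (intro mult_mono) auto
    qed
    moreover have "\<bar>((1-s)*t) * W\<bar> \<le> s * K"
    proof -
      have a1: "(1-s) * t \<le> 1 * t" using t_pos s_pos by (intro mult_right_mono) auto
      have a2: "0 \<le> (1-s) * t" using t_pos s_half by simp
      have "0 \<le> (1-s)*t" "(1-s)*t \<le> s" using a1 a2 t_le by linarith+
      then show ?thesis unfolding abs_mult using Wb by (intro mult_mono) auto
    qed
    moreover have "\<bar>s * eu uS y a0\<bar> \<le> s * K"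
      unfolding abs_mult using Eb s_pos by (intro mult_mono) auto
    ultimately have "sched_value uS \<sigma> \<ge> V - 4 * s * K" by (simp add: abs_le_iff)
    then have "Vs - \<eta> \<le> sched_value uS \<sigma>" using V \<tau>(2) s_eta by linarith
    then show "\<exists>\<sigma>. interval_feasible uR \<mu>0 lo hi \<sigma> \<and> Vs - \<eta> \<le> sched_value uS \<sigma>"
      using feas by blast
  qed
qed

end



lemma fst_sum_list: "fst (sum_list xs) = sum_list (map fst xs)"
  by (induction xs) auto
lemma snd_sum_list: "snd (sum_list xs) = sum_list (map snd xs)"
  by (induction xs) auto

lemma conv_slack:
  fixes C :: "'b::real_vector set"
  assumes C: "convex C" "0 \<in> C" and l: "\<forall>x\<in>set l. 0 \<le> fst x \<and> snd x \<in> C" and s: "sum_list (map fst l) \<le> 1"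
  shows "sum_list (map (\<lambda>x. fst x *\<^sub>R snd x) l) \<in> C"
proof -
  define n where "n = length l"
  define a where "a i = (if i < n then fst (l ! i) else 1 - sum_list (map fst l))" for i
  define y where "y i = (if i < n then snd (l ! i) else 0)" for i
  have "(\<Sum>i\<in>{..<Suc n}. a i) = 1"
    using sum_idx[of fst l] unfolding a_def n_def by simp
  moreover have "(\<Sum>j\<in>{..<Suc n}. a j *\<^sub>R y j) \<in> C"
  proof (rule convex_sum[OF _ C(1)])
    show "(\<Sum>i\<in>{..<Suc n}. a i) = 1"
      using sum_idx[of fst l] unfolding a_def n_def by simp
    show "0 \<le> a i" if "i \<in> {..<Suc n}" for i
      using l s nth_mem[of i l] unfolding a_def n_def by auto
    show "y i \<in> C" if "i \<in> {..<Suc n}" for i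
      using l C(2) nth_mem[of i l] unfolding y_def n_def by auto
  qed simp
  moreover have "(\<Sum>j\<in>{..<Suc n}. a j *\<^sub>R y j) = sum_list (map (\<lambda>x. fst x *\<^sub>R snd x) l)"
    using sum_idx[of "\<lambda>x. fst x *\<^sub>R snd x" l] unfolding a_def y_def n_def by simp
  ultimately show ?thesis by simp
qed

context S begin

definition "P0 a = {\<nu>. belief \<nu> \<and> (\<forall>a'. a' \<noteq> a \<and> \<not> movable uR \<mu>0 a a' \<longrightarrow> du uR a a' \<nu> \<ge> 0)}"

lemma du_inner: "du uR a a' \<nu> = (\<chi> w. uR a w - uR a' w) \<bullet> \<nu>"
  by (simp add: du_def inner_vec_def)

lemma P0_poly: "polyhedron (P0 a)"
proof -
  have eq: "P0 a = (\<Inter>w\<in>UNIV. {\<nu>. axis w 1 \<bullet> \<nu> \<ge> 0}) \<inter> {\<nu>. (\<chi> w. 1) \<bullet> \<nu> = 1} \<inter>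
     (\<Inter>a'\<in>{a'. a' \<noteq> a \<and> \<not> movable uR \<mu>0 a a'}. {\<nu>. (\<chi> w. uR a w - uR a' w) \<bullet> \<nu> \<ge> 0})"
  proof -
    have ax: "axis w 1 \<bullet> \<nu> = \<nu> $ w" for w and \<nu> :: "real^'w" by (simp add: inner_axis')
    show ?thesis unfolding P0_def belief_def du_inner ax by (auto simp: inner_vec_def)
  qed
  show ?thesis unfolding eq
    by (intro polyhedron_Int polyhedron_Inter polyhedron_halfspace_ge polyhedron_hyperplane)
       (auto intro: polyhedron_halfspace_ge)
qed

lemma regionJ_P0: "regionJ uR \<mu>0 a lo hi \<subseteq> P0 a"
  unfolding regionJ_def P0_def bndJ_def bnd_def movable_def by auto

lemma ext_P0:
  assumes ext: "\<nu> extreme_point_of regionJ uR \<mu>0 a lo hi"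
    and nt: "\<forall>a'. movable uR \<mu>0 a a' \<longrightarrow> du uR a a' \<nu> \<noteq> bndJ uR \<mu>0 a a' lo hi"
  shows "\<nu> extreme_point_of P0 a"
proof -
  have inR: "\<nu> \<in> regionJ uR \<mu>0 a lo hi" using ext by (simp add: extreme_point_of_def)
  define Ob where "Ob = (\<Inter>a'\<in>{a'. a' \<noteq> a \<and> movable uR \<mu>0 a a'}. {x. (\<chi> w. uR a w - uR a' w) \<bullet> x > bndJ uR \<mu>0 a a' lo hi})"
  have Oopen: "open Ob" unfolding Ob_def by (intro open_INT) (auto intro: open_halfspace_gt)
  have nuO: "\<nu> \<in> Ob"
    using inR nt unfolding Ob_def regionJ_def du_inner[symmetric] by (force simp: order_le_less)
  have sub: "P0 a \<inter> Ob \<subseteq> regionJ uR \<mu>0 a lo hi"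
  proof
    fix x assume x: "x \<in> P0 a \<inter> Ob"
    have "bndJ uR \<mu>0 a a' lo hi \<le> du uR a a' x" if a': "a' \<noteq> a" for a'
    proof (cases "movable uR \<mu>0 a a'")
      case True
      then show ?thesis using x a' unfolding Ob_def du_inner[symmetric] by (auto intro: less_imp_le)
    next
      case False
      then have "bndJ uR \<mu>0 a a' lo hi = 0" by (simp add: movable_def bndJ_def bnd_def)
      then show ?thesis using x a' False unfolding P0_def by auto
    qed
    then show "x \<in> regionJ uR \<mu>0 a lo hi" using x unfolding regionJ_def P0_def by auto
  qed
  obtain e where e: "e > 0" "ball \<nu> e \<subseteq> Ob" using Oopen nuO open_contains_ball by blast
  have cvx: "convex (P0 a)" using P0_poly polyhedron_imp_convex by blast
  have nuP: "\<nu> \<in> P0 a" using inR regionJ_P0 by blast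
  show ?thesis unfolding extreme_point_of_def
  proof (intro conjI ballI notI)
    show "\<nu> \<in> P0 a" by (rule nuP)
    fix x y assume x: "x \<in> P0 a" and y: "y \<in> P0 a" and seg: "\<nu> \<in> open_segment x y"
    obtain u where u: "x \<noteq> y" "0 < u" "u < 1" "\<nu> = (1 - u) *\<^sub>R x + u *\<^sub>R y"
      using seg by (auto simp: in_segment)
    define r where "r = min (1/2) (e / (2 * (norm (x - \<nu>) + norm (y - \<nu>) + 1)))"
    have N0: "0 < 2 * (norm (x - \<nu>) + norm (y - \<nu>) + 1)"
      by (intro mult_pos_pos add_nonneg_pos add_nonneg_nonneg norm_ge_zero) auto
    have r: "0 < r" "r \<le> 1" unfolding r_def using e N0 by (auto simp del: distrib_left_numeral)
    have rn: "r * norm (z - \<nu>) < e" if "z = x \<or> z = y" for z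
    proof -
      have N: "0 < norm (x - \<nu>) + norm (y - \<nu>) + 1"
        by (intro add_nonneg_pos add_nonneg_nonneg norm_ge_zero) auto
      have "r \<le> e / (2 * (norm (x - \<nu>) + norm (y - \<nu>) + 1))" unfolding r_def by simp
      then have "r * (2 * (norm (x - \<nu>) + norm (y - \<nu>) + 1)) \<le> e" using N by (simp add: field_simps)
      moreover have "norm (z - \<nu>) < 2 * (norm (x - \<nu>) + norm (y - \<nu>) + 1)"
      proof -
        have n1: "0 \<le> norm (x - \<nu>)" "0 \<le> norm (y - \<nu>)" by simp_all
        have "norm (z - \<nu>) \<le> norm (x - \<nu>) + norm (y - \<nu>)" using that n1 by auto
        then show ?thesis using n1 by (simp only: distrib_left)
      qed
      ultimately show ?thesis using r by (smt (verit) mult_strict_left_mono)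
    qed
    define x' where "x' = (1 - r) *\<^sub>R \<nu> + r *\<^sub>R x"
    define y' where "y' = (1 - r) *\<^sub>R \<nu> + r *\<^sub>R y"
    have x'P: "x' \<in> P0 a" unfolding x'_def using cvx nuP x r by (intro convexD) auto
    have y'P: "y' \<in> P0 a" unfolding y'_def using cvx nuP y r by (intro convexD) auto
    have x'd: "x' - \<nu> = r *\<^sub>R (x - \<nu>)" unfolding x'_def by (simp add: algebra_simps)
    have y'd: "y' - \<nu> = r *\<^sub>R (y - \<nu>)" unfolding y'_def by (simp add: algebra_simps)
    have x'Ob: "x' \<in> Ob"
    proof -
      have "dist \<nu> x' = norm (x' - \<nu>)" by (simp add: dist_norm norm_minus_commute)
      also have "\<dots> = r * norm (x - \<nu>)" using r by (simp add: x'd)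
      finally have "dist \<nu> x' < e" using rn[of x] by simp
      then show ?thesis using e by auto
    qed
    have y'Ob: "y' \<in> Ob"
    proof -
      have "dist \<nu> y' = norm (y' - \<nu>)" by (simp add: dist_norm norm_minus_commute)
      also have "\<dots> = r * norm (y - \<nu>)" using r by (simp add: y'd)
      finally have "dist \<nu> y' < e" using rn[of y] by simp
      then show ?thesis using e by auto
    qed
    have "\<nu> \<in> open_segment x' y'"
      unfolding in_segment
    proof (intro conjI exI[of _ u])
      show "x' \<noteq> y'" using u(1) r unfolding x'_def y'_def by auto
      show "\<nu> = (1 - u) *\<^sub>R x' + u *\<^sub>R y'"
      proof -
        have "(1 - u) *\<^sub>R x' + u *\<^sub>R y' = \<nu> + r *\<^sub>R ((1 - u) *\<^sub>R x + u *\<^sub>R y - \<nu>)"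
          unfolding x'_def y'_def by (simp add: algebra_simps)
        then show ?thesis using u(4) by simp
      qed
    qed (use u in auto)
    moreover have "x' \<in> regionJ uR \<mu>0 a lo hi" "y' \<in> regionJ uR \<mu>0 a lo hi"
      using sub x'P y'P x'Ob y'Ob by auto
    ultimately show False using ext unfolding extreme_point_of_def by blast
  qed
qed

end



lemma norm_sum_list_le: "norm (sum_list (xs :: 'b::real_normed_vector list)) \<le> sum_list (map norm xs)"
  by (induction xs) (auto intro: order_trans[OF norm_triangle_ineq])

lemma belief_norm: "belief \<nu> \<Longrightarrow> norm \<nu> \<le> 1"
  using norm_le_l1_cart[of \<nu>] unfolding belief_def by simp

context S begin

definition "Gs = {(\<nu>,a). a \<in> relevant uR \<mu>0 \<alpha>s \<and> \<nu> extreme_point_of P0 a \<and> \<nu> \<in> region uR \<mu>0 a \<alpha>s \<and>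
   (\<forall>a'. movable uR \<mu>0 a a' \<longrightarrow> du uR a a' \<nu> \<noteq> bnd uR \<mu>0 a a' \<alpha>s)}"
definition "fG = (\<lambda>(\<nu>,a). (\<nu>, eu uS \<nu> a))"

lemma finite_Gs: "finite Gs"
proof -
  have "Gs \<subseteq> (\<Union>a\<in>UNIV. (\<lambda>\<nu>. (\<nu>,a)) ` {\<nu>. \<nu> extreme_point_of P0 a})" unfolding Gs_def by auto
  moreover have "finite (\<Union>a\<in>UNIV. (\<lambda>\<nu>. (\<nu>,a)) ` {\<nu>. \<nu> extreme_point_of P0 a})"
    using finite_polyhedron_extreme_points[OF P0_poly] by auto
  ultimately show ?thesis by (rule finite_subset)
qed

lemma intIC_rel:
  assumes "0 < lo" "lo \<le> \<alpha>s" "\<alpha>s \<le> hi" "intIC uR \<mu>0 a lo hi \<noteq> {}"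
  shows "a \<in> relevant uR \<mu>0 \<alpha>s"
proof -
  obtain \<nu> where "\<nu> \<in> intIC uR \<mu>0 a lo hi" using assms(4) by blast
  then have "belief \<nu> \<and> (\<forall>a'. a' \<noteq> a \<longrightarrow> du uR a a' \<nu> > bnd uR \<mu>0 a a' \<alpha>s)"
  proof -
    have "bnd uR \<mu>0 a a' \<alpha>s < du uR a a' \<nu>" if "a' \<noteq> a" for a'
      using \<open>\<nu> \<in> intIC uR \<mu>0 a lo hi\<close> bnd_le_bndJ[OF assms(1-3), of uR \<mu>0 a a'] that
      unfolding intIC_def by force
    then show ?thesis using \<open>\<nu> \<in> intIC uR \<mu>0 a lo hi\<close> unfolding intIC_def by auto
  qed
  then show ?thesis unfolding rel_iff by blast
qed

lemma good_atom:
  assumes J: "0 < lo" "lo \<le> \<alpha>s" "\<alpha>s \<le> hi" and ic: "intIC uR \<mu>0 a lo hi \<noteq> {}"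
    and ext: "\<nu> extreme_point_of regionJ uR \<mu>0 a lo hi"
    and nt: "\<not> (\<exists>a'. movable uR \<mu>0 a a' \<and> du uR a a' \<nu> = bndJ uR \<mu>0 a a' lo hi)"
  shows "(\<nu>, a) \<in> Gs"
proof -
  have inR: "\<nu> \<in> regionJ uR \<mu>0 a lo hi" using ext by (simp add: extreme_point_of_def)
  have "\<nu> extreme_point_of P0 a" using ext_P0[OF ext] nt by blast
  moreover have "\<nu> \<in> region uR \<mu>0 a \<alpha>s"
  proof -
    have "bnd uR \<mu>0 a a' \<alpha>s \<le> du uR a a' \<nu>" if "a' \<noteq> a" for a'
      using inR bnd_le_bndJ[OF J, of uR \<mu>0 a a'] that unfolding regionJ_def by force
    then show ?thesis using inR unfolding regionJ_def region_def by auto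
  qed
  moreover have "du uR a a' \<nu> \<noteq> bnd uR \<mu>0 a a' \<alpha>s" if m: "movable uR \<mu>0 a a'" for a'
  proof -
    have "a' \<noteq> a" using m by (auto simp: movable_def du_def)
    then have "du uR a a' \<nu> \<ge> bndJ uR \<mu>0 a a' lo hi" using inR by (simp add: regionJ_def)
    moreover have "du uR a a' \<nu> \<noteq> bndJ uR \<mu>0 a a' lo hi" using nt m by blast
    ultimately show ?thesis using bnd_le_bndJ[OF J, of uR \<mu>0 a a'] by linarith
  qed
  ultimately show ?thesis unfolding Gs_def using intIC_rel[OF J ic] by auto
qed

lemma if_bound: "interval_feasible uR \<mu>0 lo hi \<sigma> \<Longrightarrow> sched_value uS \<sigma> \<le> K"
proof -
  assume h: "interval_feasible uR \<mu>0 lo hi \<sigma>"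
  then have "is_scheme \<mu>0 \<sigma>" "\<forall>x\<in>set \<sigma>. belief (fst (snd x))"
    unfolding interval_feasible_def regionJ_def by (auto simp: split_def)
  from sv_bound[OF this, of uS] show ?thesis using Kf_nonneg[of uR] unfolding K_def by linarith
qed

lemma main_alt:
  assumes nopt: "\<not> (\<exists>c>0. \<exists>\<epsilon>>0. \<forall>lo hi. 0 < lo \<and> lo \<le> \<alpha>s \<and> \<alpha>s \<le> hi \<and> hi \<le> 1 \<and> hi - lo \<le> \<epsilon> \<longrightarrow>
            (\<forall>\<tau>. interval_safe_vertex_opt uS uR \<mu>0 lo hi \<tau> \<longrightarrow> P_info_J uR \<mu>0 lo hi \<tau> \<ge> c))"
  shows "\<exists>\<tau>. true_bias_optimal uS uR \<mu>0 \<alpha>s \<tau> \<and> P_info_alpha uR \<mu>0 \<alpha>s \<tau> = 0"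
proof -
  define Wset where "Wset = insert 0 (fG ` Gs)"
  define H :: "((real^'w) \<times> real) set" where "H = {\<mu>0} \<times> {Vs..}"
  have finW: "finite Wset" unfolding Wset_def using finite_Gs by simp
  have cpt: "compact (convex hull Wset)" using finW by (rule finite_imp_compact_convex_hull)
  have cl: "closed H" unfolding H_def by (intro closed_Times) auto
  have cvx: "convex (convex hull Wset)" by simp
  have zero: "0 \<in> convex hull Wset" unfolding Wset_def by (intro hull_inc) simp
  have Kp: "0 < K" by (rule K_pos)
  have ne: "convex hull Wset \<inter> H \<noteq> {}"
  proof
    assume dis: "convex hull Wset \<inter> H = {}"
    obtain d where d: "d > 0" "\<forall>x\<in>convex hull Wset. \<forall>y\<in>H. d \<le> dist x y"
      using separate_compact_closed[OF cpt cl dis] by blast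
    define \<eta> where "\<eta> = d/4"
    define \<delta> where "\<delta> = d / (4 * (K + 1))"
    have \<eta>p: "0 < \<eta>" unfolding \<eta>_def using d by simp
    have \<delta>p: "0 < \<delta>" unfolding \<delta>_def using d Kp by simp
    have \<delta>K: "\<delta> * (K + 1) = d / 4" unfolding \<delta>_def using Kp by (simp add: field_simps)
    obtain \<epsilon> where \<epsilon>: "\<epsilon> > 0" and \<epsilon>p: "\<forall>lo hi. 0 < lo \<and> lo \<le> \<alpha>s \<and> \<alpha>s \<le> hi \<and> hi \<le> 1 \<and> hi - lo \<le> \<epsilon> \<longrightarrow>
       (\<exists>\<sigma>. interval_feasible uR \<mu>0 lo hi \<sigma> \<and> Vs - \<eta> \<le> sched_value uS \<sigma>)"
      using stepA[OF \<eta>p] by blast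
    obtain lo hi \<tau> where J: "0 < lo \<and> lo \<le> \<alpha>s \<and> \<alpha>s \<le> hi \<and> hi \<le> 1 \<and> hi - lo \<le> \<epsilon>"
      and isvo: "interval_safe_vertex_opt uS uR \<mu>0 lo hi \<tau>" and small: "P_info_J uR \<mu>0 lo hi \<tau> < \<delta>"
    proof -
      have "\<not> (\<forall>lo hi. 0 < lo \<and> lo \<le> \<alpha>s \<and> \<alpha>s \<le> hi \<and> hi \<le> 1 \<and> hi - lo \<le> \<epsilon> \<longrightarrow>
            (\<forall>\<tau>. interval_safe_vertex_opt uS uR \<mu>0 lo hi \<tau> \<longrightarrow> P_info_J uR \<mu>0 lo hi \<tau> \<ge> \<delta>))"
        using nopt \<delta>p \<epsilon> by blast
      then show ?thesis using that by (auto simp: not_le)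
    qed
    obtain \<sigma> where \<sigma>: "interval_feasible uR \<mu>0 lo hi \<sigma>" "Vs - \<eta> \<le> sched_value uS \<sigma>"
      using \<epsilon>p J by blast
    have sch: "is_scheme \<mu>0 \<tau>"
      and atm: "\<And>x. x \<in> set \<tau> \<Longrightarrow> intIC uR \<mu>0 (snd (snd x)) lo hi \<noteq> {} \<and>
                 fst (snd x) extreme_point_of regionJ uR \<mu>0 (snd (snd x)) lo hi"
      and val: "sched_value uS \<tau> = Sup (sched_value uS ` {\<sigma>. interval_feasible uR \<mu>0 lo hi \<sigma>})"
      using isvo unfolding interval_safe_vertex_opt_def by (auto simp: split_def)
    have \<tau>s: "\<forall>x\<in>set \<tau>. 0 \<le> fst x" "sum_list (map fst \<tau>) = 1"
        "sum_list (map (\<lambda>x. fst x *\<^sub>R fst (snd x)) \<tau>) = \<mu>0"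
      using sch unfolding is_scheme_list by auto
    have bel: "belief (fst (snd x))" if "x \<in> set \<tau>" for x
      using atm[OF that] unfolding extreme_point_of_def regionJ_def by auto
    have "sched_value uS \<sigma> \<le> sched_value uS \<tau>"
      unfolding val using \<sigma>(1) if_bound by (intro cSup_upper bdd_aboveI[of _ K]) auto
    then have valt: "Vs - \<eta> \<le> sched_value uS \<tau>" using \<sigma>(2) by linarith
    define tight where "tight (x :: real \<times> (real^'w) \<times> 'a) = (\<exists>a'. movable uR \<mu>0 (snd (snd x)) a' \<and>
        du uR (snd (snd x)) a' (fst (snd x)) = bndJ uR \<mu>0 (snd (snd x)) a' lo hi)" for x
    have Pinfo: "P_info_J uR \<mu>0 lo hi \<tau> = sum_list (map (\<lambda>x. if tight x then fst x else 0) \<tau>)"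
      unfolding P_info_J_list tight_def ..
    define L where "L = map (\<lambda>x. (if tight x then 0 else fst x,
        if tight x then 0 else fG (fst (snd x), snd (snd x)))) \<tau>"
    define z where "z = sum_list (map (\<lambda>q. fst q *\<^sub>R snd q) L)"
    have zin: "z \<in> convex hull Wset"
      unfolding z_def
    proof (rule conv_slack[OF cvx zero])
      show "\<forall>q\<in>set L. 0 \<le> fst q \<and> snd q \<in> convex hull Wset"
      proof
        fix q assume "q \<in> set L"
        then obtain x where x: "x \<in> set \<tau>" "q = (if tight x then 0 else fst x,
            if tight x then 0 else fG (fst (snd x), snd (snd x)))" unfolding L_def by auto
        show "0 \<le> fst q \<and> snd q \<in> convex hull Wset"
        proof (cases "tight x")
          case True then show ?thesis using x zero by simp
        next
          case False
          have "(fst (snd x), snd (snd x)) \<in> Gs"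
            using good_atom[of lo hi "snd (snd x)" "fst (snd x)"] J atm[OF x(1)] False unfolding tight_def by blast
          then have "fG (fst (snd x), snd (snd x)) \<in> convex hull Wset"
            unfolding Wset_def by (intro hull_inc) simp
          then show ?thesis using x False \<tau>s(1) by simp
        qed
      qed
      have "sum_list (map fst L) \<le> sum_list (map fst \<tau>)"
        unfolding L_def map_map o_def using \<tau>s(1) by (intro sum_list_mono) auto
      then show "sum_list (map fst L) \<le> 1" using \<tau>s(2) by simp
    qed
    have zfst: "fst z = sum_list (map (\<lambda>x. if tight x then 0 else fst x *\<^sub>R fst (snd x)) \<tau>)"
      unfolding z_def L_def fst_sum_list map_map o_def
      by (intro arg_cong[where f=sum_list] map_cong) (auto simp: fG_def)
    have zsnd: "snd z = sum_list (map (\<lambda>x. if tight x then 0 else fst x * eu uS (fst (snd x)) (snd (snd x))) \<tau>)"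
      unfolding z_def L_def snd_sum_list map_map o_def
      by (intro arg_cong[where f=sum_list] map_cong) (auto simp: fG_def)
    have d1: "norm (fst z - \<mu>0) \<le> P_info_J uR \<mu>0 lo hi \<tau>"
    proof -
      have "\<mu>0 - fst z = sum_list (map (\<lambda>x. if tight x then fst x *\<^sub>R fst (snd x) else 0) \<tau>)"
        unfolding zfst \<tau>s(3)[symmetric] sum_list_subtractf[symmetric]
        by (intro arg_cong[where f=sum_list] map_cong) auto
      then have "norm (fst z - \<mu>0) = norm (sum_list (map (\<lambda>x. if tight x then fst x *\<^sub>R fst (snd x) else 0) \<tau>))"
        by (simp add: norm_minus_commute)
      also have "\<dots> \<le> sum_list (map norm (map (\<lambda>x. if tight x then fst x *\<^sub>R fst (snd x) else 0) \<tau>))"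
        by (rule norm_sum_list_le)
      also have "\<dots> \<le> sum_list (map (\<lambda>x. if tight x then fst x else 0) \<tau>)"
        unfolding map_map o_def
      proof (rule sum_list_mono)
        fix x assume x: "x \<in> set \<tau>"
        have "fst x * norm (fst (snd x)) \<le> fst x * 1"
          using belief_norm[OF bel[OF x]] \<tau>s(1) x by (intro mult_left_mono) auto
        then show "norm (if tight x then fst x *\<^sub>R fst (snd x) else 0) \<le> (if tight x then fst x else 0)"
          using \<tau>s(1) x by auto
      qed
      finally show ?thesis unfolding Pinfo .
    qed
    have d2: "Vs - \<eta> - \<delta> * K \<le> snd z"
    proof -
      have "sched_value uS \<tau> = snd z + sum_list (map (\<lambda>x. if tight x then fst x * eu uS (fst (snd x)) (snd (snd x)) else 0) \<tau>)"
        unfolding sched_value_list zsnd sum_list_addf[symmetric]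
        by (intro arg_cong[where f=sum_list] map_cong) auto
      moreover have "sum_list (map (\<lambda>x. if tight x then fst x * eu uS (fst (snd x)) (snd (snd x)) else 0) \<tau>)
          \<le> sum_list (map (\<lambda>x. K * (if tight x then fst x else 0)) \<tau>)"
      proof (rule sum_list_mono)
        fix x assume x: "x \<in> set \<tau>"
        have "eu uS (fst (snd x)) (snd (snd x)) \<le> K" using eu_K[OF bel[OF x], of "snd (snd x)"] by linarith
        then have "fst x * eu uS (fst (snd x)) (snd (snd x)) \<le> fst x * K"
          using \<tau>s(1) x by (intro mult_left_mono) auto
        then show "(if tight x then fst x * eu uS (fst (snd x)) (snd (snd x)) else 0) \<le> K * (if tight x then fst x else 0)"
          by (auto simp: mult.commute)
      qed
      moreover have "sum_list (map (\<lambda>x. K * (if tight x then fst x else 0)) \<tau>) = K * P_info_J uR \<mu>0 lo hi \<tau>"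
        unfolding Pinfo by (simp add: sum_list_const_mult)
      moreover have "K * P_info_J uR \<mu>0 lo hi \<tau> \<le> K * \<delta>" using small Kp by simp
      ultimately show ?thesis using valt by (simp add: mult.commute)
    qed
    define h where "h = (\<mu>0, max (snd z) Vs)"
    have hH: "h \<in> H" unfolding h_def H_def by auto
    have "dist z h = norm (fst z - \<mu>0, snd z - max (snd z) Vs)"
      unfolding h_def dist_norm by (cases z) simp
    also have "\<dots> \<le> norm (fst z - \<mu>0) + norm (snd z - max (snd z) Vs)" by (rule norm_Pair_le)
    also have "\<dots> \<le> \<delta> + (\<eta> + \<delta> * K)"
    proof -
      have "norm (snd z - max (snd z) Vs) \<le> \<eta> + \<delta> * K" using d2 \<eta>p \<delta>p Kp by (auto simp: max_def)
      then show ?thesis using d1 small by linarith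
    qed
    also have "\<dots> = \<delta> * (K + 1) + \<eta>" by (simp add: algebra_simps)
    also have "\<dots> < d" using \<delta>K d(1) unfolding \<eta>_def by simp
    finally have "dist z h < d" .
    then show False using d(2) zin hH by fastforce
  qed
  then obtain zs where zs: "zs \<in> convex hull Wset" "zs \<in> H" by blast
  obtain u where u: "\<forall>x\<in>Wset. 0 \<le> u x" "sum u Wset = 1" "(\<Sum>x\<in>Wset. u x *\<^sub>R x) = zs"
    using zs(1) unfolding convex_hull_finite[OF finW] by blast
  have beliefG: "belief (fst v)" if "v \<in> fG ` Gs" for v
    using that unfolding fG_def Gs_def region_def by auto
  have n0: "0 \<notin> fG ` Gs"
  proof
    assume "0 \<in> fG ` Gs"
    then have "belief (fst (0 :: (real^'w) \<times> real))" by (rule beliefG)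
    then show False by (simp add: belief_def)
  qed
  have finF: "finite (fG ` Gs)" using finite_Gs by simp
  have zsum: "(\<Sum>x\<in>fG ` Gs. u x *\<^sub>R x) = zs"
    using u(3) n0 finF unfolding Wset_def by (simp add: sum.insert)
  have mean: "(\<Sum>x\<in>fG ` Gs. u x *\<^sub>R fst x) = \<mu>0"
    using zs(2) zsum fst_sum[of "\<lambda>x. u x *\<^sub>R x" "fG ` Gs"] unfolding H_def by auto
  have vge: "Vs \<le> (\<Sum>x\<in>fG ` Gs. u x * snd x)"
    using zs(2) zsum snd_sum[of "\<lambda>x. u x *\<^sub>R x" "fG ` Gs"] unfolding H_def by auto
  have sum1: "(\<Sum>x\<in>fG ` Gs. u x) = 1"
  proof -
    have m2: "(\<Sum>w\<in>UNIV. (\<Sum>x\<in>fG ` Gs. u x *\<^sub>R fst x) $ w) = (\<Sum>w\<in>UNIV. \<mu>0 $ w)"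
      using mean by (rule arg_cong[where f="\<lambda>v. \<Sum>w\<in>UNIV. v $ w"])
    have "(\<Sum>w\<in>UNIV. (\<Sum>x\<in>fG ` Gs. u x *\<^sub>R fst x) $ w) = (\<Sum>w\<in>UNIV. \<Sum>x\<in>fG ` Gs. u x * fst x $ w)"
      by (simp only: sum_component vector_scaleR_component real_scaleR_def)
    also have "\<dots> = (\<Sum>x\<in>fG ` Gs. u x * (\<Sum>w\<in>UNIV. fst x $ w))"
      by (subst sum.swap) (simp only: sum_distrib_left)
    also have "\<dots> = (\<Sum>x\<in>fG ` Gs. u x)"
      using beliefG by (intro sum.cong) (auto simp: belief_def)
    finally have eq: "(\<Sum>w\<in>UNIV. (\<Sum>x\<in>fG ` Gs. u x *\<^sub>R fst x) $ w) = (\<Sum>x\<in>fG ` Gs. u x)" .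
    show ?thesis using eq m2 ps by linarith
  qed
  obtain xs where xs: "set xs = fG ` Gs" "distinct xs" using finite_distinct_list[OF finF] by blast
  define act where "act v = (SOME a. (fst v, a) \<in> Gs \<and> snd v = eu uS (fst v) a)" for v
  have act: "(fst v, act v) \<in> Gs \<and> snd v = eu uS (fst v) (act v)" if "v \<in> fG ` Gs" for v
  proof -
    from that obtain \<nu> a where "(\<nu>, a) \<in> Gs" "v = fG (\<nu>, a)" by auto
    then have "\<exists>a. (fst v, a) \<in> Gs \<and> snd v = eu uS (fst v) a" by (auto simp: fG_def)
    then show ?thesis unfolding act_def by (rule someI_ex)
  qed
  define \<tau>s where "\<tau>s = map (\<lambda>v. (u v, fst v, act v)) xs"
  have conv: "sum_list (map g xs) = (\<Sum>v\<in>fG ` Gs. g v)" for g :: "(real^'w) \<times> real \<Rightarrow> real"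
    using sum_list_distinct_conv_sum_set[OF xs(2)] xs(1) by simp
  have convv: "sum_list (map g xs) = (\<Sum>v\<in>fG ` Gs. g v)" for g :: "(real^'w) \<times> real \<Rightarrow> real^'w"
    using sum_list_distinct_conv_sum_set[OF xs(2)] xs(1) by simp
  have feas: "true_bias_feasible uR \<mu>0 \<alpha>s \<tau>s"
    unfolding true_bias_feasible_def
  proof
    show "is_scheme \<mu>0 \<tau>s"
      unfolding is_scheme_list \<tau>s_def map_map o_def
      using u(1) xs(1) conv convv sum1 mean unfolding Wset_def by auto
    show "\<forall>(p, \<nu>, a)\<in>set \<tau>s. a \<in> relevant uR \<mu>0 \<alpha>s \<and> \<nu> \<in> region uR \<mu>0 a \<alpha>s"
      unfolding \<tau>s_def using act xs(1) unfolding Gs_def by auto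
  qed
  have sv: "Vs \<le> sched_value uS \<tau>s"
  proof -
    have "sched_value uS \<tau>s = (\<Sum>v\<in>fG ` Gs. u v * eu uS (fst v) (act v))"
      unfolding sched_value_list \<tau>s_def map_map o_def by (simp add: conv)
    also have "\<dots> = (\<Sum>v\<in>fG ` Gs. u v * snd v)" using act by (intro sum.cong) auto
    finally show ?thesis using vge by simp
  qed
  have opt: "true_bias_optimal uS uR \<mu>0 \<alpha>s \<tau>s"
    unfolding true_bias_optimal_def using feas sv Vs_upper unfolding TBF_def by (auto intro: order_trans)
  have "P_info_alpha uR \<mu>0 \<alpha>s \<tau>s = 0"
  proof -
    have "P_info_alpha uR \<mu>0 \<alpha>s \<tau>s = sum_list (map (\<lambda>v. 0) xs)"
      unfolding P_info_alpha_list \<tau>s_def map_map o_def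
    proof (intro arg_cong[where f=sum_list] map_cong refl)
      fix v assume "v \<in> set xs"
      then have "(fst v, act v) \<in> Gs" using act xs(1) by blast
      then show "(if \<exists>a'. movable uR \<mu>0 (snd (snd (u v, fst v, act v))) a' \<and>
               du uR (snd (snd (u v, fst v, act v))) a' (fst (snd (u v, fst v, act v))) =
               bnd uR \<mu>0 (snd (snd (u v, fst v, act v))) a' \<alpha>s
           then fst (u v, fst v, act v) else 0) = 0"
        unfolding Gs_def by auto
    qed
    then show ?thesis by simp
  qed
  then show ?thesis using opt by blast
qed

end

theorem proposition4p4:
  fixes \<mu>0 :: "real^'w::finite"
    and uS uR :: "'a::finite \<Rightarrow> 'w \<Rightarrow> real"
    and \<alpha>s :: real
  assumes full_support: "\<forall>w. 0 < \<mu>0 $ w"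
    and prior_sum: "(\<Sum>w\<in>UNIV. \<mu>0 $ w) = 1"
    and unique_default: "\<exists>a0. {a. \<forall>a'. eu uR \<mu>0 a' \<le> eu uR \<mu>0 a} = {a0}"
    and alpha_pos: "0 < \<alpha>s" and alpha_le1: "\<alpha>s \<le> 1"
  shows "(\<exists>c>0. \<exists>\<epsilon>>0. \<forall>lo hi. 0 < lo \<and> lo \<le> \<alpha>s \<and> \<alpha>s \<le> hi \<and> hi \<le> 1 \<and> hi - lo \<le> \<epsilon> \<longrightarrow>
            (\<forall>\<tau>. interval_safe_vertex_opt uS uR \<mu>0 lo hi \<tau> \<longrightarrow> P_info_J uR \<mu>0 lo hi \<tau> \<ge> c))
       \<or> (\<exists>\<tau>. true_bias_optimal uS uR \<mu>0 \<alpha>s \<tau> \<and> P_info_alpha uR \<mu>0 \<alpha>s \<tau> = 0)"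
proof -
  obtain a0 where a0: "{a. \<forall>a'. eu uR \<mu>0 a' \<le> eu uR \<mu>0 a} = {a0}" using unique_default by blast
  have a0max: "\<forall>a'. a' \<noteq> a0 \<longrightarrow> eu uR \<mu>0 a' < eu uR \<mu>0 a0"
  proof (intro allI impI)
    fix a' assume ne: "a' \<noteq> a0"
    have max0: "\<forall>b. eu uR \<mu>0 b \<le> eu uR \<mu>0 a0" using a0 by blast
    show "eu uR \<mu>0 a' < eu uR \<mu>0 a0"
    proof (rule ccontr)
      assume "\<not> eu uR \<mu>0 a' < eu uR \<mu>0 a0"
      then have "\<forall>b. eu uR \<mu>0 b \<le> eu uR \<mu>0 a'" using max0 by (meson order_trans not_less)
      then have "a' \<in> {a. \<forall>a'. eu uR \<mu>0 a' \<le> eu uR \<mu>0 a}" by blast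
      then show False using a0 ne by blast
    qed
  qed
  interpret S \<mu>0 uS uR \<alpha>s a0
    by unfold_locales (use full_support prior_sum a0max alpha_pos alpha_le1 in auto)
  show ?thesis using main_alt by blast
qed

end
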